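(* Let $(\Omega,\Sigma,\mu)$ be a finite measure space and let $X(\mu)$ be a Banach rectangular function space. The following are equivalent: (i) $X(\mu)$ has the subsequence property; (ii) the inclusion $X(\mu)\subseteq L^0(\mu)$ is continuous, where $L^0(\mu)$ carries the topology of convergence in measure; (iii) the positive cone $X(\mu)^+=\{f\in X(\mu):f\ge 0\ \mu\text{-a.e.}\}$ is closed in $X(\mu)$.
   Context: $L^0(\mu)$ is the space of equivalence classes (modulo $\mu$-a.e. equality) of real $\Sigma$-measurable functions on $\Omega$. A Banach rectangular function space is a vector subspace $X(\mu)\subseteq L^0(\mu)$ with a complete norm such that for some $C>0$, $\chi_Af\in X(\mu)$ and $\|\chi_Af\|\le C\|f\|$ for all $f\in X(\mu)$, $A\in\Sigma$. The subsequence property: whenever $f_n,f\in X(\mu)$ and $f_n\to f$ in norm, some subsequence converges to $f$ $\mu$-a.e. *)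

theory Defs
  imports "HOL-Analysis.Analysis"
begin

text \<open>Elements of L^0(mu) are represented by real measurable functions; a function space
X(mu) is represented by a set X of representatives that is saturated under mu-a.e. equality,
and the norm nrm is a function on representatives that is invariant under a.e. equality
and vanishes exactly on the null class (so it is a norm on the equivalence classes).\<close>

definition banach_rectangular_fs ::
  "'a measure \<Rightarrow> ('a \<Rightarrow> real) set \<Rightarrow> (('a \<Rightarrow> real) \<Rightarrow> real) \<Rightarrow> bool" where
  "banach_rectangular_fs M X nrm \<longleftrightarrow>
     \<comment> \<open>subset of L^0, saturated under a.e. equality\<close>
     X \<subseteq> borel_measurable M \<and>
     (\<forall>f\<in>X. \<forall>g\<in>borel_measurable M. (AE x in M. f x = g x) \<longrightarrow> g \<in> X) \<and>
     \<comment> \<open>vector subspace\<close>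
     (\<lambda>x. 0) \<in> X \<and>
     (\<forall>f\<in>X. \<forall>g\<in>X. (\<lambda>x. f x + g x) \<in> X) \<and>
     (\<forall>c::real. \<forall>f\<in>X. (\<lambda>x. c * f x) \<in> X) \<and>
     \<comment> \<open>norm on equivalence classes\<close>
     (\<forall>f\<in>X. \<forall>g\<in>X. (AE x in M. f x = g x) \<longrightarrow> nrm f = nrm g) \<and>
     (\<forall>f\<in>X. 0 \<le> nrm f) \<and>
     (\<forall>f\<in>X. nrm f = 0 \<longleftrightarrow> (AE x in M. f x = 0)) \<and>
     (\<forall>c::real. \<forall>f\<in>X. nrm (\<lambda>x. c * f x) = \<bar>c\<bar> * nrm f) \<and>
     (\<forall>f\<in>X. \<forall>g\<in>X. nrm (\<lambda>x. f x + g x) \<le> nrm f + nrm g) \<and>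
     \<comment> \<open>completeness\<close>
     (\<forall>fs. (\<forall>n. fs n \<in> X) \<longrightarrow>
        (\<forall>e>0. \<exists>N. \<forall>m\<ge>N. \<forall>n\<ge>N. nrm (\<lambda>x. fs m x - fs n x) < e) \<longrightarrow>
        (\<exists>f\<in>X. (\<lambda>n. nrm (\<lambda>x. fs n x - f x)) \<longlonglongrightarrow> 0)) \<and>
     \<comment> \<open>rectangular (ideal-like under multiplication by indicators)\<close>
     (\<exists>C>0. \<forall>f\<in>X. \<forall>A\<in>sets M.
        (\<lambda>x. indicator A x * f x) \<in> X \<and> nrm (\<lambda>x. indicator A x * f x) \<le> C * nrm f)"

definition subsequence_property ::
  "'a measure \<Rightarrow> ('a \<Rightarrow> real) set \<Rightarrow> (('a \<Rightarrow> real) \<Rightarrow> real) \<Rightarrow> bool" where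
  "subsequence_property M X nrm \<longleftrightarrow>
     (\<forall>fs f. (\<forall>n. fs n \<in> X) \<longrightarrow> f \<in> X \<longrightarrow>
        (\<lambda>n. nrm (\<lambda>x. fs n x - f x)) \<longlonglongrightarrow> 0 \<longrightarrow>
        (\<exists>r. strict_mono r \<and> (AE x in M. (\<lambda>n. fs (r n) x) \<longlonglongrightarrow> f x)))"

text \<open>Continuity of the inclusion X \<subseteq> L^0 (topology of convergence in measure, whose
neighbourhood base at f is {g. mu{|g - f| > eps} < delta}), at every point of X.\<close>
definition inclusion_L0_continuous ::
  "'a measure \<Rightarrow> ('a \<Rightarrow> real) set \<Rightarrow> (('a \<Rightarrow> real) \<Rightarrow> real) \<Rightarrow> bool" where
  "inclusion_L0_continuous M X nrm \<longleftrightarrow>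
     (\<forall>f\<in>X. \<forall>\<epsilon>>0. \<forall>\<delta>>0. \<exists>r>0. \<forall>g\<in>X. nrm (\<lambda>x. g x - f x) < r \<longrightarrow>
        measure M {x\<in>space M. \<bar>g x - f x\<bar> > \<epsilon>} < \<delta>)"

definition positive_cone ::
  "'a measure \<Rightarrow> ('a \<Rightarrow> real) set \<Rightarrow> ('a \<Rightarrow> real) set" where
  "positive_cone M X = {f\<in>X. AE x in M. 0 \<le> f x}"

definition cone_closed ::
  "'a measure \<Rightarrow> ('a \<Rightarrow> real) set \<Rightarrow> (('a \<Rightarrow> real) \<Rightarrow> real) \<Rightarrow> bool" where
  "cone_closed M X nrm \<longleftrightarrow>
     (\<forall>f\<in>X. (\<forall>e>0. \<exists>g\<in>positive_cone M X. nrm (\<lambda>x. g x - f x) < e) \<longrightarrow>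
        f \<in> positive_cone M X)"

end

theory Submission
  imports Defs
begin

lemma brfs_X_meas:
  assumes "banach_rectangular_fs M X nrm" "f \<in> X"
  shows "f \<in> borel_measurable M"
  using assms unfolding banach_rectangular_fs_def by blast

lemma brfs_add:
  assumes "banach_rectangular_fs M X nrm" "f \<in> X" "g \<in> X"
  shows "(\<lambda>x. f x + g x) \<in> X"
  using assms unfolding banach_rectangular_fs_def by blast

lemma brfs_scale:
  assumes "banach_rectangular_fs M X nrm" "f \<in> X"
  shows "(\<lambda>x. c * f x) \<in> X" "nrm (\<lambda>x. c * f x) = \<bar>c\<bar> * nrm f"
  using assms unfolding banach_rectangular_fs_def by blast+

lemma brfs_diff:
  assumes B: "banach_rectangular_fs M X nrm" and f: "f \<in> X" and g: "g \<in> X"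
  shows "(\<lambda>x. f x - g x) \<in> X"
proof -
  have "(\<lambda>x. (-1) * g x) \<in> X" using brfs_scale[OF B g] by blast
  from brfs_add[OF B f this] show ?thesis by simp
qed

lemma brfs_tri:
  assumes "banach_rectangular_fs M X nrm" "f \<in> X" "g \<in> X"
  shows "nrm (\<lambda>x. f x + g x) \<le> nrm f + nrm g"
  using assms unfolding banach_rectangular_fs_def by blast

lemma brfs_nonneg:
  assumes "banach_rectangular_fs M X nrm" "f \<in> X"
  shows "0 \<le> nrm f"
  using assms unfolding banach_rectangular_fs_def by blast

lemma brfs_swap:
  assumes B: "banach_rectangular_fs M X nrm" and f: "f \<in> X" and g: "g \<in> X"
  shows "nrm (\<lambda>x. f x - g x) = nrm (\<lambda>x. g x - f x)"
proof -
  have d: "(\<lambda>x. g x - f x) \<in> X" using brfs_diff[OF B g f] .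
  have "nrm (\<lambda>x. (-1) * (g x - f x)) = nrm (\<lambda>x. g x - f x)"
    using brfs_scale(2)[OF B d, of "-1"] by simp
  moreover have "(\<lambda>x. (-1) * (g x - f x)) = (\<lambda>x. f x - g x)" by auto
  ultimately show ?thesis by simp
qed

lemma brfs_sum:
  assumes B: "banach_rectangular_fs M X nrm"
  shows "finite S \<Longrightarrow> (\<forall>k\<in>S. t k \<in> X) \<Longrightarrow>
     (\<lambda>x. \<Sum>k\<in>S. t k x) \<in> X \<and> nrm (\<lambda>x. \<Sum>k\<in>S. t k x) \<le> (\<Sum>k\<in>S. nrm (t k))"
proof (induction S rule: finite_induct)
  case empty
  have z: "(\<lambda>x. 0::real) \<in> X" using B unfolding banach_rectangular_fs_def by blast
  have "nrm (\<lambda>x. 0 * (0::real)) = \<bar>0\<bar> * nrm (\<lambda>x. 0)" using brfs_scale(2)[OF B z, of 0] by simp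
  then show ?case using z by simp
next
  case (insert a S)
  have a: "t a \<in> X" using insert by simp
  from insert have IH: "(\<lambda>x. \<Sum>k\<in>S. t k x) \<in> X" "nrm (\<lambda>x. \<Sum>k\<in>S. t k x) \<le> (\<Sum>k\<in>S. nrm (t k))"
    by auto
  have eq: "(\<lambda>x. \<Sum>k\<in>insert a S. t k x) = (\<lambda>x. t a x + (\<Sum>k\<in>S. t k x))"
    using insert by simp
  have tri: "nrm (\<lambda>x. t a x + (\<Sum>k\<in>S. t k x)) \<le> nrm (t a) + nrm (\<lambda>x. \<Sum>k\<in>S. t k x)"
    using brfs_tri[OF B a IH(1)] by simp
  show ?case unfolding eq using brfs_add[OF B a IH(1)] tri IH(2) insert by simp
qed

lemma geo_sum_half: "(\<Sum>k\<in>{n..<n+d}. (1/2::real)^k) = 2*(1/2)^n - 2*(1/2)^(n+d)"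
  by (induction d) (auto simp: power_add)


lemma sub_to_cone:
  assumes B: "banach_rectangular_fs M X nrm" and S: "subsequence_property M X nrm"
  shows "cone_closed M X nrm"
  unfolding cone_closed_def
proof (intro ballI impI)
  fix f assume f: "f \<in> X" and H: "\<forall>e>0. \<exists>g\<in>positive_cone M X. nrm (\<lambda>x. g x - f x) < e"
  have "\<forall>n. \<exists>g. g \<in> positive_cone M X \<and> nrm (\<lambda>x. g x - f x) < inverse (real (Suc n))"
  proof
    fix n
    have "inverse (real (Suc n)) > 0" by simp
    then show "\<exists>g. g \<in> positive_cone M X \<and> nrm (\<lambda>x. g x - f x) < inverse (real (Suc n))"
      using H by blast
  qed
  then obtain g where g: "\<And>n. g n \<in> positive_cone M X"
    and gn: "\<And>n. nrm (\<lambda>x. g n x - f x) < inverse (real (Suc n))" by metis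
  have gX: "\<And>n. g n \<in> X" using g unfolding positive_cone_def by auto
  have gpos: "AE x in M. \<forall>n. 0 \<le> g n x"
    using g unfolding positive_cone_def by (auto simp: AE_all_countable)
  have "(\<lambda>n. nrm (\<lambda>x. g n x - f x)) \<longlonglongrightarrow> 0"
  proof (rule Lim_null_comparison)
    show "\<forall>\<^sub>F n in sequentially. norm (nrm (\<lambda>x. g n x - f x)) \<le> inverse (real (Suc n))"
      using gn brfs_nonneg[OF B brfs_diff[OF B gX f]] by (intro always_eventually allI) (simp add: less_imp_le)
    show "(\<lambda>n. inverse (real (Suc n))) \<longlonglongrightarrow> 0" by (rule LIMSEQ_inverse_real_of_nat)
  qed
  then obtain r where "strict_mono r" and conv: "AE x in M. (\<lambda>n. g (r n) x) \<longlonglongrightarrow> f x"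
    using S gX f unfolding subsequence_property_def by blast
  have "AE x in M. 0 \<le> f x"
    using conv gpos
  proof eventually_elim
    case (elim x)
    show ?case by (rule LIMSEQ_le_const[OF elim(1)]) (use elim(2) in auto)
  qed
  then show "f \<in> positive_cone M X" using f unfolding positive_cone_def by auto
qed


lemma cont_to_sub:
  assumes fm: "finite_measure M" and B: "banach_rectangular_fs M X nrm"
    and IC: "inclusion_L0_continuous M X nrm"
  shows "subsequence_property M X nrm"
  unfolding subsequence_property_def
proof (intro allI impI)
  interpret finite_measure M by (rule fm)
  fix fs f assume fsX: "\<forall>n. fs n \<in> X" and f: "f \<in> X"
    and conv: "(\<lambda>n. nrm (\<lambda>x. fs n x - f x)) \<longlonglongrightarrow> 0"
  have [measurable]: "fs n \<in> borel_measurable M" for n using brfs_X_meas[OF B] fsX by blast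
  have [measurable]: "f \<in> borel_measurable M" using brfs_X_meas[OF B f] .
  have "\<forall>k. \<exists>r>0. \<forall>g\<in>X. nrm (\<lambda>x. g x - f x) < r \<longrightarrow>
        measure M {x\<in>space M. \<bar>g x - f x\<bar> > (1/2)^k} < (1/2)^k"
    using IC f unfolding inclusion_L0_continuous_def by simp
  from choice[OF this] obtain R where R: "\<forall>k. R k > 0 \<and> (\<forall>g\<in>X. nrm (\<lambda>x. g x - f x) < R k \<longrightarrow>
        measure M {x\<in>space M. \<bar>g x - f x\<bar> > (1/2)^k} < (1/2)^k)" by blast
  have Rpos: "\<And>k. R k > 0" using R by blast
  have RH: "\<And>k g. g \<in> X \<Longrightarrow> nrm (\<lambda>x. g x - f x) < R k \<Longrightarrow>
        measure M {x\<in>space M. \<bar>g x - f x\<bar> > (1/2)^k} < (1/2)^k" using R by blast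
  have "\<forall>k. \<exists>N. \<forall>n\<ge>N. nrm (\<lambda>x. fs n x - f x) < R k"
  proof
    fix k
    have "eventually (\<lambda>n. nrm (\<lambda>x. fs n x - f x) < R k) sequentially"
      using order_tendstoD(2)[OF conv Rpos[of k]] .
    then show "\<exists>N. \<forall>n\<ge>N. nrm (\<lambda>x. fs n x - f x) < R k" by (simp add: eventually_sequentially)
  qed
  from choice[OF this] obtain Nf where Nf0: "\<forall>k. \<forall>n\<ge>Nf k. nrm (\<lambda>x. fs n x - f x) < R k" by blast
  have Nf: "\<And>k n. n \<ge> Nf k \<Longrightarrow> nrm (\<lambda>x. fs n x - f x) < R k" using Nf0 by blast
  define r where "r = rec_nat (Nf 0) (\<lambda>k p. max (Nf (Suc k)) (Suc p))"
  have r0: "r 0 = Nf 0" and rS: "\<And>k. r (Suc k) = max (Nf (Suc k)) (Suc (r k))"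
    unfolding r_def by simp_all
  have sm: "strict_mono r" unfolding strict_mono_Suc_iff using rS by (simp add: less_max_iff_disj)
  have rN: "r k \<ge> Nf k" for k by (cases k) (simp_all add: r0 rS)
  define A where "A k = {x\<in>space M. \<bar>fs (r k) x - f x\<bar> > (1/2)^k}" for k
  have A_meas[measurable]: "A k \<in> sets M" for k unfolding A_def by measurable
  have Ameas: "measure M (A k) < (1/2)^k" for k
    unfolding A_def using RH[OF fsX[rule_format] Nf[OF rN]] .
  have Asum: "summable (\<lambda>k. measure M (A k))"
  proof (rule summable_comparison_test')
    show "summable (\<lambda>k. (1/2::real)^k)" by (simp add: summable_geometric)
    show "norm (measure M (A k)) \<le> (1/2)^k" for k using Ameas[of k] by simp
  qed
  have Afin: "emeasure M (A k) < \<infinity>" for k by (simp add: emeasure_eq_measure)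
  have AE: "AE x in M. eventually (\<lambda>k. x \<in> space M - A k) sequentially"
    by (rule borel_cantelli_AE1[OF A_meas Afin Asum])
  have "AE x in M. (\<lambda>k. fs (r k) x) \<longlonglongrightarrow> f x"
    using AE
  proof eventually_elim
    case (elim x)
    have "(\<lambda>k. fs (r k) x - f x) \<longlonglongrightarrow> 0"
    proof (rule Lim_null_comparison)
      show "\<forall>\<^sub>F k in sequentially. norm (fs (r k) x - f x) \<le> (1/2)^k"
        using elim by eventually_elim (auto simp: A_def)
      show "(\<lambda>k. (1/2::real)^k) \<longlonglongrightarrow> 0" by (rule LIMSEQ_power_zero) simp
    qed
    then have "(\<lambda>k. (fs (r k) x - f x) + f x) \<longlonglongrightarrow> 0 + f x" by (intro tendsto_add) auto
    then show ?case by simp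
  qed
  then show "\<exists>r. strict_mono r \<and> (AE x in M. (\<lambda>n. fs (r n) x) \<longlonglongrightarrow> f x)" using sm by blast
qed


lemma brfs_complete:
  assumes "banach_rectangular_fs M X nrm" "\<And>n. fs n \<in> X"
    "\<forall>e>0. \<exists>N. \<forall>m\<ge>N. \<forall>n\<ge>N. nrm (\<lambda>x. fs m x - fs n x) < e"
  shows "\<exists>f\<in>X. (\<lambda>n. nrm (\<lambda>x. fs n x - f x)) \<longlonglongrightarrow> 0"
proof -
  have "\<forall>fs. (\<forall>n. fs n \<in> X) \<longrightarrow>
        (\<forall>e>0. \<exists>N. \<forall>m\<ge>N. \<forall>n\<ge>N. nrm (\<lambda>x. fs m x - fs n x) < e) \<longrightarrow>
        (\<exists>f\<in>X. (\<lambda>n. nrm (\<lambda>x. fs n x - f x)) \<longlonglongrightarrow> 0)"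
    using assms(1) unfolding banach_rectangular_fs_def by (elim conjE)
  then show ?thesis using assms(2,3) by simp
qed

lemma brfs_rect:
  assumes "banach_rectangular_fs M X nrm"
  obtains C where "C > 0" "\<And>f A. f \<in> X \<Longrightarrow> A \<in> sets M \<Longrightarrow>
        (\<lambda>x. indicator A x * f x) \<in> X \<and> nrm (\<lambda>x. indicator A x * f x) \<le> C * nrm f"
proof -
  have "\<exists>C>0. \<forall>f\<in>X. \<forall>A\<in>sets M.
        (\<lambda>x. indicator A x * f x) \<in> X \<and> nrm (\<lambda>x. indicator A x * f x) \<le> C * nrm f"
    using assms unfolding banach_rectangular_fs_def by (elim conjE)
  then show ?thesis using that by auto
qed

lemma cone_closedD:
  assumes "cone_closed M X nrm" "w \<in> X"
    "\<forall>e>0. \<exists>g\<in>positive_cone M X. nrm (\<lambda>x. g x - w x) < e"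
  shows "w \<in> positive_cone M X"
  using assms unfolding cone_closed_def by simp

lemma cone_to_cont:
  assumes fm: "finite_measure M" and B: "banach_rectangular_fs M X nrm"
    and CC: "cone_closed M X nrm"
  shows "inclusion_L0_continuous M X nrm"
proof (rule ccontr)
  interpret finite_measure M by (rule fm)
  assume "\<not> inclusion_L0_continuous M X nrm"
  then have "\<exists>f\<in>X. \<exists>\<epsilon>>0. \<exists>\<delta>>0. \<forall>r>0. \<exists>g\<in>X. nrm (\<lambda>x. g x - f x) < r \<and>
        \<delta> \<le> measure M {x\<in>space M. \<bar>g x - f x\<bar> > \<epsilon>}"
    unfolding inclusion_L0_continuous_def by (simp add: not_less) (meson not_less)
  then obtain f \<epsilon> \<delta> where f: "f \<in> X" and ep: "\<epsilon> > 0" and dp: "\<delta> > 0"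
    and H: "\<forall>r>0. \<exists>g\<in>X. nrm (\<lambda>x. g x - f x) < r \<and>
        \<delta> \<le> measure M {x\<in>space M. \<bar>g x - f x\<bar> > \<epsilon>}"
    by blast
  obtain C where Cp: "C > 0" and rect: "\<And>f A. f \<in> X \<Longrightarrow> A \<in> sets M \<Longrightarrow>
        (\<lambda>x. indicator A x * f x) \<in> X \<and> nrm (\<lambda>x. indicator A x * f x) \<le> C * nrm f"
    using brfs_rect[OF B] by blast
  have key: "\<exists>h\<in>X. nrm h < r \<and> \<delta>/2 \<le> measure M {x\<in>space M. \<epsilon> < h x}" if rp: "r > 0" for r
  proof -
    obtain g where g: "g \<in> X" and gn: "nrm (\<lambda>x. g x - f x) < r"
      and gm: "\<delta> \<le> measure M {x\<in>space M. \<bar>g x - f x\<bar> > \<epsilon>}"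
      using H rp by blast
    define h0 where "h0 = (\<lambda>x. g x - f x)"
    have h0X: "h0 \<in> X" unfolding h0_def using brfs_diff[OF B g f] .
    have [measurable]: "h0 \<in> borel_measurable M" using brfs_X_meas[OF B h0X] .
    define h1 where "h1 = (\<lambda>x. (-1) * h0 x)"
    have h1X: "h1 \<in> X" unfolding h1_def using brfs_scale(1)[OF B h0X] .
    have h1n: "nrm h1 = nrm h0" unfolding h1_def using brfs_scale(2)[OF B h0X, of "-1"] by simp
    have un: "{x\<in>space M. \<bar>h0 x\<bar> > \<epsilon>} = {x\<in>space M. \<epsilon> < h0 x} \<union> {x\<in>space M. \<epsilon> < h1 x}"
      unfolding h1_def by auto
    have "\<delta> \<le> measure M {x\<in>space M. \<bar>h0 x\<bar> > \<epsilon>}" using gm unfolding h0_def by simp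
    also have "\<dots> \<le> measure M {x\<in>space M. \<epsilon> < h0 x} + measure M {x\<in>space M. \<epsilon> < h1 x}"
      unfolding un by (rule measure_Un_le) (auto simp: h1_def)
    finally have "\<delta>/2 \<le> measure M {x\<in>space M. \<epsilon> < h0 x} \<or> \<delta>/2 \<le> measure M {x\<in>space M. \<epsilon> < h1 x}"
      by linarith
    moreover have "nrm h0 < r" using gn unfolding h0_def .
    ultimately show ?thesis
    proof (elim disjE)
      assume "nrm h0 < r" "\<delta>/2 \<le> measure M {x\<in>space M. \<epsilon> < h0 x}"
      then show ?thesis using h0X by blast
    next
      assume "nrm h0 < r" "\<delta>/2 \<le> measure M {x\<in>space M. \<epsilon> < h1 x}"
      then show ?thesis using h1X h1n by (intro bexI[of _ h1]) auto
    qed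
  qed
  have "\<forall>k. \<exists>h. h \<in> X \<and> nrm h < (1/2)^k / (real (Suc k) * C) \<and>
      \<delta>/2 \<le> measure M {x\<in>space M. \<epsilon> < h x}"
  proof
    fix k
    have "(1/2::real)^k / (real (Suc k) * C) > 0" using Cp by simp
    from key[OF this] show "\<exists>h. h \<in> X \<and> nrm h < (1/2)^k / (real (Suc k) * C) \<and>
      \<delta>/2 \<le> measure M {x\<in>space M. \<epsilon> < h x}" by blast
  qed
  from choice[OF this] obtain h where h: "\<forall>k. h k \<in> X \<and> nrm (h k) < (1/2)^k / (real (Suc k) * C) \<and>
      \<delta>/2 \<le> measure M {x\<in>space M. \<epsilon> < h k x}" by blast
  have hX: "\<And>k. h k \<in> X" using h by blast
  have hn: "\<And>k. nrm (h k) < (1/2)^k / (real (Suc k) * C)" using h by blast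
  have hm: "\<And>k. \<delta>/2 \<le> measure M {x\<in>space M. \<epsilon> < h k x}" using h by blast
  have [measurable]: "\<And>k. h k \<in> borel_measurable M" using brfs_X_meas[OF B hX] .
  define A where "A k = {x\<in>space M. \<epsilon> < h k x}" for k
  have A_meas[measurable]: "A k \<in> sets M" for k unfolding A_def by measurable
  define t where "t k = (\<lambda>x. real (Suc k) * (indicator (A k) x * h k x))" for k
  have iX: "(\<lambda>x. indicator (A k) x * h k x) \<in> X" and
       iN: "nrm (\<lambda>x. indicator (A k) x * h k x) \<le> C * nrm (h k)" for k
    using rect[OF hX A_meas] by auto
  have tX: "t k \<in> X" for k unfolding t_def using brfs_scale(1)[OF B iX] .
  have tN: "nrm (t k) \<le> (1/2)^k" for k
  proof -
    have "nrm (t k) = real (Suc k) * nrm (\<lambda>x. indicator (A k) x * h k x)"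
      unfolding t_def using brfs_scale(2)[OF B iX] by simp
    also have "\<dots> \<le> real (Suc k) * (C * nrm (h k))"
      using iN by (intro mult_left_mono) auto
    also have "\<dots> \<le> real (Suc k) * (C * ((1/2)^k / (real (Suc k) * C)))"
      using hn[of k] Cp by (intro mult_left_mono) auto
    also have "\<dots> = (1/2)^k" using Cp by simp
    finally show ?thesis .
  qed
  have tpos: "0 \<le> t k x" for k x
    using ep unfolding t_def A_def by (auto simp: indicator_def)
  have tbig: "x \<in> A k \<Longrightarrow> real (Suc k) * \<epsilon> \<le> t k x" for k x
    using ep unfolding t_def A_def by (auto simp: indicator_def)
  define s where "s N = (\<lambda>x. \<Sum>k<N. t k x)" for N
  have sX: "s N \<in> X" for N unfolding s_def using brfs_sum[OF B, of "{..<N}" t] tX by blast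
  have sdiff: "nrm (\<lambda>x. s m x - s n x) \<le> 2 * (1/2)^n" if "n \<le> m" for m n
  proof -
    obtain d where m: "m = n + d" using \<open>n \<le> m\<close> le_Suc_ex by blast
    have eq: "(\<lambda>x. s m x - s n x) = (\<lambda>x. \<Sum>k\<in>{n..<m}. t k x)"
    proof
      fix x
      have "(\<Sum>k<m. t k x) = (\<Sum>k<n. t k x) + (\<Sum>k\<in>{n..<m}. t k x)"
        using sum.atLeastLessThan_concat[of 0 n m "\<lambda>k. t k x"] \<open>n \<le> m\<close>
        by (simp add: atLeast0LessThan)
      then show "s m x - s n x = (\<Sum>k\<in>{n..<m}. t k x)" unfolding s_def by simp
    qed
    have "nrm (\<lambda>x. s m x - s n x) = nrm (\<lambda>x. \<Sum>k\<in>{n..<m}. t k x)" by (simp only: eq)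
    also have "\<dots> \<le> (\<Sum>k\<in>{n..<m}. nrm (t k))"
      using brfs_sum[OF B, of "{n..<m}" t] tX by blast
    also have "\<dots> \<le> (\<Sum>k\<in>{n..<m}. (1/2)^k)" by (intro sum_mono tN)
    also have "\<dots> = 2*(1/2)^n - 2*(1/2)^m" unfolding m by (rule geo_sum_half)
    also have "\<dots> \<le> 2 * (1/2)^n" by simp
    finally show ?thesis .
  qed
  have cauchy: "\<forall>e>0. \<exists>N. \<forall>m\<ge>N. \<forall>n\<ge>N. nrm (\<lambda>x. s m x - s n x) < e"
  proof (intro allI impI)
    fix e :: real assume "e > 0"
    have "(\<lambda>n. 2 * (1/2::real)^n) \<longlonglongrightarrow> 2 * 0"
      by (intro tendsto_mult tendsto_const LIMSEQ_power_zero) simp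
    from order_tendstoD(2)[OF this] \<open>e > 0\<close>
    obtain N where N: "\<And>n. n \<ge> N \<Longrightarrow> 2 * (1/2::real)^n < e"
      by (auto simp: eventually_sequentially)
    show "\<exists>N. \<forall>m\<ge>N. \<forall>n\<ge>N. nrm (\<lambda>x. s m x - s n x) < e"
    proof (intro exI allI impI)
      fix m n assume mN: "m \<ge> N" and nN: "n \<ge> N"
      show "nrm (\<lambda>x. s m x - s n x) < e"
      proof (cases "n \<le> m")
        case True then show ?thesis using sdiff[OF True] N[OF nN] by linarith
      next
        case False
        then have "nrm (\<lambda>x. s n x - s m x) \<le> 2 * (1/2)^m" using sdiff by simp
        then show ?thesis using N[OF mN] brfs_swap[OF B sX sX, of m n] by linarith
      qed
    qed
  qed
  have "\<exists>u\<in>X. (\<lambda>N. nrm (\<lambda>x. s N x - u x)) \<longlonglongrightarrow> 0"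
    by (rule brfs_complete[OF B sX cauchy])
  then obtain u where uX: "u \<in> X" and su: "(\<lambda>N. nrm (\<lambda>x. s N x - u x)) \<longlonglongrightarrow> 0" by blast
  have [measurable]: "u \<in> borel_measurable M" using brfs_X_meas[OF B uX] .
  define D where "D n = {x\<in>space M. real (Suc n) * \<epsilon> \<le> u x}" for n
  have D_meas[measurable]: "D n \<in> sets M" for n unfolding D_def by measurable
  have Dbig: "\<delta>/2 \<le> measure M (D n)" for n
  proof -
    define w where "w = (\<lambda>x. u x - t n x)"
    have wX: "w \<in> X" unfolding w_def using brfs_diff[OF B uX tX] .
    have "w \<in> positive_cone M X"
    proof (rule cone_closedD[OF CC wX])
      show "\<forall>e>0. \<exists>g\<in>positive_cone M X. nrm (\<lambda>x. g x - w x) < e"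
      proof (intro allI impI)
        fix e :: real assume "e > 0"
        from order_tendstoD(2)[OF su this] obtain N0 where
          N0: "\<And>N. N \<ge> N0 \<Longrightarrow> nrm (\<lambda>x. s N x - u x) < e"
          by (auto simp: eventually_sequentially)
        define N where "N = max N0 (Suc n)"
        define g where "g = (\<lambda>x. s N x - t n x)"
        have gX: "g \<in> X" unfolding g_def using brfs_diff[OF B sX tX] .
        have "t n x \<le> s N x" for x
          unfolding s_def by (rule member_le_sum) (auto simp: N_def tpos)
        then have "g \<in> positive_cone M X" using gX unfolding positive_cone_def g_def by auto
        moreover have geq: "(\<lambda>x. g x - w x) = (\<lambda>x. s N x - u x)" unfolding g_def w_def by auto
        ultimately show "\<exists>g\<in>positive_cone M X. nrm (\<lambda>x. g x - w x) < e"
        proof (intro bexI[of _ g])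
          show "nrm (\<lambda>x. g x - w x) < e" unfolding geq using N0[of N] by (simp add: N_def)
        qed
      qed
    qed
    then have "AE x in M. 0 \<le> u x - t n x" unfolding positive_cone_def w_def by auto
    then have "AE x in M. x \<in> A n \<longrightarrow> x \<in> D n"
    proof eventually_elim
      case (elim x)
      show ?case
      proof
        assume xa: "x \<in> A n"
        have "real (Suc n) * \<epsilon> \<le> t n x" by (rule tbig[OF xa])
        moreover have "x \<in> space M" using xa unfolding A_def by simp
        ultimately show "x \<in> D n" using elim unfolding D_def by simp
      qed
    qed
    then have "measure M (A n) \<le> measure M (D n)" by (rule finite_measure_mono_AE) simp
    then show ?thesis using hm[of n] unfolding A_def by linarith
  qed
  have dec: "decseq D"
  proof (rule decseq_SucI)
    fix n
    have "real (Suc n) * \<epsilon> \<le> real (Suc (Suc n)) * \<epsilon>" using ep by (intro mult_right_mono) auto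
    then show "D (Suc n) \<subseteq> D n"
      unfolding D_def by auto
  qed
  have empty: "(\<Inter>n. D n) = {}"
  proof safe
    fix x assume x: "x \<in> (\<Inter>n. D n)"
    obtain n where "u x < real n * \<epsilon>" using ex_less_of_nat_mult[OF ep] by blast
    moreover have "real (Suc n) * \<epsilon> \<le> u x" using x unfolding D_def by blast
    ultimately show "x \<in> {}" using ep by (simp add: algebra_simps)
  qed
  have "(\<lambda>n. measure M (D n)) \<longlonglongrightarrow> measure M (\<Inter>n. D n)"
    by (rule finite_Lim_measure_decseq) (auto simp: dec)
  then have "(\<lambda>n. measure M (D n)) \<longlonglongrightarrow> 0" by (simp add: empty)
  then have "\<delta>/2 \<le> 0" by (rule LIMSEQ_le_const) (use Dbig in auto)
  then show False using dp by simp
qed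

theorem lemma2p8:
  fixes M :: "'a measure" and X :: "('a \<Rightarrow> real) set" and nrm :: "('a \<Rightarrow> real) \<Rightarrow> real"
  assumes "finite_measure M"
    and "banach_rectangular_fs M X nrm"
  shows "(subsequence_property M X nrm \<longleftrightarrow> inclusion_L0_continuous M X nrm) \<and>
         (inclusion_L0_continuous M X nrm \<longleftrightarrow> cone_closed M X nrm)"
  using sub_to_cone[OF assms(2)] cone_to_cont[OF assms] cont_to_sub[OF assms] by blast

end
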